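(* Let $\mu$ be a stationary ergodic probability measure on $\Omega$. If $\mathbb P_0(T_{-1}=\infty)>0$, then almost surely (with respect to the law $\nu$ of the random arrow environment $a$) there are infinitely many optional regeneration positions $m\ge0$ for $a$.
   Context: Notation: $\mathbb N=\{1,2,\dots\}$. Cookie environments $\omega\in\Omega=[0,1]^{\mathbb Z\times\mathbb N}$; shift $(\theta\omega)(x,n)=\omega(x+1,n)$; $\mu$ stationary ergodic means $\theta$-invariant and ergodic. An arrow environment is $a\in\{0,1\}^{\mathbb Z\times\mathbb N}$; the walk on $a$ started at $x$ is the deterministic sequence with $X_0=x$ and $X_n=X_{n-1}+1$ if $a(X_{n-1},k)=1$, $X_n=X_{n-1}-1$ if $a(X_{n-1},k)=0$, where $k=\#\{j\le n-1:X_j=X_{n-1}\}$. The random arrow environment is obtained by taking $\omega\sim\mu$ and independent i.i.d. Uniform$[0,1]$ variables $u(x,n)$, and setting $a(x,n)=\mathbf 1_{\{u(x,n)<\omega(x,n)\}}$; $\nu$ is its law, and the annealed law $\mathbb P_x$ of the walk on this random $a$ started at $x$ coincides with the annealed excited random walk law $\int P_{\omega,x}\,d\mu(\omega)$, where under $P_{\omega,x}$ the walk from $X_{n-1}$ steps right with probability $\omega(X_{n-1},\#\{k\le n-1:X_k=X_{n-1}\})$ and left otherwise. $T_m=\inf\{t\ge0:X_t=m\}$. An integer $m\ge0$ is an optional regeneration position for $a$ if the walk on $a$ started at $m$ never hits $m-1$. *)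

theory Defs
  imports "HOL-Probability.Probability"
begin

definition cookie_index :: "(int \<times> nat) set" where
  "cookie_index = UNIV \<times> {1..}"

definition Omega_M :: "(int \<times> nat \<Rightarrow> real) measure" where
  "Omega_M = PiM cookie_index (\<lambda>_. restrict_space borel {0..1::real})"

definition shift :: "(int \<times> nat \<Rightarrow> real) \<Rightarrow> (int \<times> nat \<Rightarrow> real)" where
  "shift w = (\<lambda>i\<in>cookie_index. w (fst i + 1, snd i))"

definition stationary_ergodic :: "(int \<times> nat \<Rightarrow> real) measure \<Rightarrow> bool" where
  "stationary_ergodic \<mu> \<longleftrightarrow>
     prob_space \<mu> \<and> sets \<mu> = sets Omega_M \<and>
     distr \<mu> Omega_M shift = \<mu> \<and>
     (\<forall>A\<in>sets \<mu>. shift -` A \<inter> space \<mu> = A \<longrightarrow> measure \<mu> A = 0 \<or> measure \<mu> A = 1)"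

text \<open>Arrow environments in {0,1}^(Z x N) (True = 1 = step right).\<close>
definition Arrow_M :: "(int \<times> nat \<Rightarrow> bool) measure" where
  "Arrow_M = PiM cookie_index (\<lambda>_. count_space UNIV)"

definition Unif_M :: "(int \<times> nat \<Rightarrow> real) measure" where
  "Unif_M = PiM cookie_index (\<lambda>_. uniform_measure lborel {0..1::real})"

definition arrow_law :: "(int \<times> nat \<Rightarrow> real) measure \<Rightarrow> (int \<times> nat \<Rightarrow> bool) measure" where
  "arrow_law \<mu> = distr (\<mu> \<Otimes>\<^sub>M Unif_M) Arrow_M
      (\<lambda>(w, u). \<lambda>i\<in>cookie_index. u i < w i)"

text \<open>History X_0,...,X_n of the deterministic walk on the arrow environment a started at x.
  At time n the walk is at y = X_n and uses arrow a(y,k), k = number of j \<le> n with X_j = y.\<close>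
fun walk_hist :: "(int \<times> nat \<Rightarrow> bool) \<Rightarrow> int \<Rightarrow> nat \<Rightarrow> int list" where
  "walk_hist a x 0 = [x]"
| "walk_hist a x (Suc n) =
     (let h = walk_hist a x n; y = last h; k = count_list h y
      in h @ [if a (y, k) then y + 1 else y - 1])"

definition walk :: "(int \<times> nat \<Rightarrow> bool) \<Rightarrow> int \<Rightarrow> nat \<Rightarrow> int" where
  "walk a x n = last (walk_hist a x n)"

definition optional_regeneration :: "(int \<times> nat \<Rightarrow> bool) \<Rightarrow> int \<Rightarrow> bool" where
  "optional_regeneration a m \<longleftrightarrow> m \<ge> 0 \<and> (\<forall>n. walk a m n \<noteq> m - 1)"

end

theory Submission
  imports Defs
begin


lemma walk_hist_ne: "walk_hist a x n \<noteq> []"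
  by (cases n) (auto simp: Let_def)

lemma walk_0[simp]: "walk a x 0 = x" by (simp add: walk_def)

lemma walk_Suc: "walk a x (Suc n) = (if a (walk a x n, count_list (walk_hist a x n) (walk a x n)) then walk a x n + 1 else walk a x n - 1)"
  by (simp add: walk_def Let_def)

lemma count_last_pos: "h \<noteq> [] \<Longrightarrow> count_list h (last h) \<ge> 1"
  by (induction h) (auto split: if_splits)

lemma count_list_map_inj: "inj f \<Longrightarrow> count_list (map f h) (f y) = count_list h y"
  by (induction h) (auto dest: injD)

definition ash :: "(int \<times> nat \<Rightarrow> 'b) \<Rightarrow> (int \<times> nat \<Rightarrow> 'b)" where
  "ash a = (\<lambda>i\<in>cookie_index. a (fst i + 1, snd i))"

lemma walk_hist_cong:
  assumes "\<And>j. j < n \<Longrightarrow> walk a x j \<ge> m"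
    and "\<And>y k. y \<ge> m \<Longrightarrow> k \<ge> 1 \<Longrightarrow> a (y,k) = b (y,k)"
  shows "walk_hist a x n = walk_hist b x n"
  using assms(1)
proof (induction n)
  case 0 then show ?case by simp
next
  case (Suc n)
  then have IH: "walk_hist a x n = walk_hist b x n" by auto
  have "walk a x n \<ge> m" using Suc.prems by auto
  moreover have "count_list (walk_hist a x n) (last (walk_hist a x n)) \<ge> 1"
    using walk_hist_ne count_last_pos by blast
  ultimately have "a (last (walk_hist a x n), count_list (walk_hist a x n) (last (walk_hist a x n)))
     = b (last (walk_hist a x n), count_list (walk_hist a x n) (last (walk_hist a x n)))"
    using assms(2) by (simp add: walk_def)
  then show ?case using IH by (simp add: Let_def)
qed

lemma walk_hist_shift:
  "walk_hist (\<lambda>(y,k). a (y+1,k)) x n = map (\<lambda>z. z - 1) (walk_hist a (x+1) n)"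
proof (induction n)
  case 0 then show ?case by simp
next
  case (Suc n)
  have inj: "inj (\<lambda>z::int. z - 1)" by (auto intro: injI)
  have ne: "walk_hist a (x+1) n \<noteq> []" by (rule walk_hist_ne)
  show ?case using Suc ne
    by (simp add: Let_def last_map count_list_map_inj[OF inj])
qed

definition Qp :: "(int \<times> nat \<Rightarrow> bool) \<Rightarrow> int \<Rightarrow> bool" where
  "Qp a m \<longleftrightarrow> (\<forall>n. walk a m n \<noteq> m - 1)"

lemma Qp_ge: assumes "Qp a m" shows "walk a m n \<ge> m"
proof (induction n)
  case 0 then show ?case by simp
next
  case (Suc n)
  have "walk a m (Suc n) \<noteq> m - 1" using assms by (auto simp: Qp_def)
  then show ?case using Suc by (auto simp: walk_Suc)
qed

lemma Qp_cong1:
  assumes "\<And>y k. y \<ge> m \<Longrightarrow> k \<ge> 1 \<Longrightarrow> a (y,k) = b (y,k)" and "Qp a m"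
  shows "Qp b m"
proof -
  have "walk_hist a m n = walk_hist b m n" for n
    using walk_hist_cong[of n m a m b] assms(1) Qp_ge[OF assms(2)] by blast
  then show ?thesis using assms(2) by (simp add: Qp_def walk_def)
qed

lemma Qp_cong:
  assumes "\<And>y k. y \<ge> m \<Longrightarrow> k \<ge> 1 \<Longrightarrow> a (y,k) = b (y,k)"
  shows "Qp a m = Qp b m"
  using Qp_cong1[of m a b] Qp_cong1[of m b a] assms by metis

lemma Qp_ash: "Qp (ash a) m = Qp a (m+1)"
proof -
  have "Qp (ash a) m = Qp (\<lambda>(y,k). a (y+1,k)) m"
    by (rule Qp_cong) (auto simp: ash_def cookie_index_def)
  also have "\<dots> = Qp a (m+1)"
    unfolding Qp_def walk_def walk_hist_shift
    by (simp add: last_map walk_hist_ne)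
  finally show ?thesis .
qed




definition Ep :: "(int \<times> nat \<Rightarrow> bool) \<Rightarrow> bool" where
  "Ep a \<longleftrightarrow> infinite {m::int. optional_regeneration a m}"

lemma Ep_iff: "Ep a \<longleftrightarrow> (\<forall>N::nat. \<exists>m::nat. m \<ge> N \<and> Qp a (int m))"
proof
  assume "Ep a"
  show "\<forall>N::nat. \<exists>m::nat. m \<ge> N \<and> Qp a (int m)"
  proof (rule ccontr)
    assume "\<not> ?thesis"
    then obtain N where N: "\<And>m::nat. m \<ge> N \<Longrightarrow> \<not> Qp a (int m)" by auto
    have "{m::int. optional_regeneration a m} \<subseteq> {0..<int N}"
    proof
      fix m assume "m \<in> {m::int. optional_regeneration a m}"
      then have "m \<ge> 0" "Qp a m" by (auto simp: optional_regeneration_def Qp_def)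
      then show "m \<in> {0..<int N}" using N[of "nat m"] by (cases "nat m \<ge> N") auto
    qed
    then show False using \<open>Ep a\<close> by (auto simp: Ep_def dest: finite_subset)
  qed
next
  assume H: "\<forall>N::nat. \<exists>m::nat. m \<ge> N \<and> Qp a (int m)"
  show "Ep a"
  proof (rule ccontr)
    assume "\<not> Ep a"
    then have "finite {m::int. optional_regeneration a m}" by (simp add: Ep_def)
    then obtain B where B: "\<And>x. x \<in> {m::int. optional_regeneration a m} \<Longrightarrow> x \<le> B"
      using bdd_above_finite[of "{m::int. optional_regeneration a m}"] by (auto simp: bdd_above_def)
    obtain m :: nat where "m \<ge> nat B + 1" "Qp a (int m)" using H by blast
    then have "optional_regeneration a (int m)" by (simp add: optional_regeneration_def Qp_def)
    then have "int m \<le> B" using B by auto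
    with \<open>m \<ge> nat B + 1\<close> show False by linarith
  qed
qed

lemma Ep_ash: "Ep (ash a) = Ep a"
proof -
  have "(\<forall>N::nat. \<exists>m::nat. m \<ge> N \<and> Qp a (int m + 1)) = (\<forall>N::nat. \<exists>m::nat. m \<ge> N \<and> Qp a (int m))"
  proof
    assume H: "\<forall>N::nat. \<exists>m::nat. m \<ge> N \<and> Qp a (int m + 1)"
    show "\<forall>N::nat. \<exists>m::nat. m \<ge> N \<and> Qp a (int m)"
    proof
      fix N obtain m where "m \<ge> N" "Qp a (int m + 1)" using H by blast
      then show "\<exists>m::nat. m \<ge> N \<and> Qp a (int m)" by (intro exI[of _ "Suc m"]) (auto simp: add.commute)
    qed
  next
    assume H: "\<forall>N::nat. \<exists>m::nat. m \<ge> N \<and> Qp a (int m)"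
    show "\<forall>N::nat. \<exists>m::nat. m \<ge> N \<and> Qp a (int m + 1)"
    proof
      fix N obtain m where "m \<ge> Suc N" "Qp a (int m)" using H by blast
      then show "\<exists>m::nat. m \<ge> N \<and> Qp a (int m + 1)"
        by (intro exI[of _ "m - 1"]) (auto simp: of_nat_diff)
    qed
  qed
  then show ?thesis by (simp add: Ep_iff Qp_ash)
qed

lemma Ep_cong:
  assumes "\<And>y k. y \<ge> int n \<Longrightarrow> k \<ge> 1 \<Longrightarrow> a (y,k) = b (y,k)"
  shows "Ep a = Ep b"
proof -
  have *: "Qp a (int m) = Qp b (int m)" if "m \<ge> n" for m
    by (rule Qp_cong) (use assms that in auto)
  have "(\<forall>N::nat. \<exists>m::nat. m \<ge> N \<and> Qp a (int m)) = (\<forall>N::nat. \<exists>m::nat. m \<ge> N \<and> Qp b (int m))"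
  proof -
    have "(\<forall>N::nat. \<exists>m::nat. m \<ge> N \<and> Qp a (int m)) = (\<forall>N::nat. \<exists>m::nat. m \<ge> max N n \<and> Qp a (int m))"
      by (metis max.cobounded1 max.cobounded2 order_trans)
    also have "\<dots> = (\<forall>N::nat. \<exists>m::nat. m \<ge> max N n \<and> Qp b (int m))"
      using * by (meson max.boundedE)
    also have "\<dots> = (\<forall>N::nat. \<exists>m::nat. m \<ge> N \<and> Qp b (int m))"
      by (metis max.cobounded1 max.cobounded2 order_trans)
    finally show ?thesis .
  qed
  then show ?thesis by (simp add: Ep_iff)
qed

lemma space_Arrow: "space Arrow_M = (\<Pi>\<^sub>E i\<in>cookie_index. UNIV)"
  by (simp add: Arrow_M_def space_PiM)

lemma meas_comp_arrow: "(\<lambda>a. a i) \<in> measurable Arrow_M (count_space UNIV)"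
proof (cases "i \<in> cookie_index")
  case True then show ?thesis unfolding Arrow_M_def by (rule measurable_component_singleton)
next
  case False
  have "(\<lambda>a::int\<times>nat\<Rightarrow>bool. undefined :: bool) \<in> measurable Arrow_M (count_space UNIV)" by simp
  moreover have "\<And>a. a \<in> space Arrow_M \<Longrightarrow> undefined = a i"
    using False by (metis PiE_arb space_Arrow)
  ultimately show ?thesis
    using measurable_cong[of Arrow_M "\<lambda>a. undefined" "\<lambda>a. a i"] by simp
qed

lemma meas_walk_hist: "(\<lambda>a. walk_hist a x n) \<in> measurable Arrow_M (count_space UNIV)"
proof (induction n)
  case 0 then show ?case unfolding walk_hist.simps by (rule measurable_const) simp
next
  case (Suc n)
  let ?f = "\<lambda>h a. h @ [if a (last h, count_list h (last h)) then last h + 1 else last h - 1]"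
  have f: "(\<lambda>a. ?f h a) \<in> measurable Arrow_M (count_space UNIV)" for h
  proof -
    have "(\<lambda>b. h @ [if b then last h + 1 else last h - 1]) \<in> measurable (count_space UNIV) (count_space UNIV)"
      by (rule measurable_count_space)
    from measurable_compose[OF meas_comp_arrow this] show ?thesis .
  qed
  have "(\<lambda>a. ?f (walk_hist a x n) a) \<in> measurable Arrow_M (count_space UNIV)"
    by (rule measurable_compose_countable[OF f Suc])
  then show ?case unfolding walk_hist.simps Let_def .
qed

lemma meas_walk: "(\<lambda>a. walk a x n) \<in> measurable Arrow_M (count_space UNIV)"
  unfolding walk_def by (rule measurable_compose[OF meas_walk_hist measurable_count_space])

definition Qset :: "int \<Rightarrow> (int \<times> nat \<Rightarrow> bool) set" where
  "Qset m = {a \<in> space Arrow_M. Qp a m}"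
definition Eset :: "(int \<times> nat \<Rightarrow> bool) set" where
  "Eset = {a \<in> space Arrow_M. Ep a}"
definition En :: "nat \<Rightarrow> (int \<times> nat \<Rightarrow> bool) set" where
  "En N = {a \<in> space Arrow_M. \<exists>m::nat. m \<ge> N \<and> Qp a (int m)}"

lemma Qset_sets: "Qset m \<in> sets Arrow_M"
proof -
  have "Qset m = (\<Inter>n\<in>UNIV. (\<lambda>a. walk a m n) -` (UNIV - {m - 1}) \<inter> space Arrow_M)"
    by (auto simp: Qset_def Qp_def)
  also have "\<dots> \<in> sets Arrow_M"
    using measurable_sets[OF meas_walk] by (intro sets.countable_INT) auto
  finally show ?thesis .
qed

lemma En_sets: "En N \<in> sets Arrow_M"
proof -
  have "En N = (\<Union>m\<in>{N..}. Qset (int m))"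
    by (auto simp: En_def Qset_def)
  also have "\<dots> \<in> sets Arrow_M"
    using Qset_sets by (intro sets.countable_UN) auto
  finally show ?thesis .
qed

lemma Eset_Inter: "Eset = (\<Inter>N. En N)"
  by (auto simp: Eset_def En_def Ep_iff)

lemma Eset_sets: "Eset \<in> sets Arrow_M"
  unfolding Eset_Inter using En_sets by (intro sets.countable_INT) auto




abbreviation UM1 :: "real measure" where "UM1 \<equiv> uniform_measure lborel {0..1::real}"

definition Phi :: "(int \<times> nat \<Rightarrow> real) \<Rightarrow> (int \<times> nat \<Rightarrow> real) \<Rightarrow> (int \<times> nat \<Rightarrow> bool)" where
  "Phi w u = (\<lambda>i\<in>cookie_index. u i < w i)"

definition Pw :: "(int \<times> nat \<Rightarrow> real) \<Rightarrow> (int \<times> nat \<Rightarrow> bool) measure" where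
  "Pw w = distr Unif_M Arrow_M (Phi w)"

definition unsh :: "(int \<times> nat \<Rightarrow> real) \<Rightarrow> (int \<times> nat \<Rightarrow> real)" where
  "unsh u = (\<lambda>i\<in>cookie_index. u (fst i - 1, snd i))"

lemma prob_UM1: "prob_space UM1"
  by (rule prob_space_uniform_measure) auto

lemma prob_Unif: "prob_space Unif_M"
  unfolding Unif_M_def by (intro prob_space_PiM prob_UM1)

lemma space_Unif: "space Unif_M = (\<Pi>\<^sub>E i\<in>cookie_index. UNIV)"
  by (simp add: Unif_M_def space_PiM)

lemma sets_UM1: "sets UM1 = sets borel" by simp

lemma comp_Unif: "(\<lambda>u. u i) \<in> borel_measurable Unif_M" if "i \<in> cookie_index"
proof -
  have "(\<lambda>u. u i) \<in> measurable Unif_M UM1"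
    unfolding Unif_M_def by (rule measurable_component_singleton[OF that])
  then show ?thesis using measurable_cong_sets[OF refl sets_UM1] by blast
qed

lemma meas_Phi: "Phi w \<in> measurable Unif_M Arrow_M"
proof -
  have "(\<lambda>u. u i < w i) \<in> measurable Unif_M (count_space UNIV)" if "i \<in> cookie_index" for i
    using comp_Unif[OF that] by measurable
  then have "(\<lambda>u. \<lambda>i\<in>cookie_index. u i < w i) \<in> measurable Unif_M Arrow_M"
    unfolding Arrow_M_def by (intro measurable_restrict) auto
  then show ?thesis unfolding Phi_def .
qed

lemma comp_Omega: "(\<lambda>w. w i) \<in> borel_measurable Omega_M" if "i \<in> cookie_index"
proof -
  have "(\<lambda>w. w i) \<in> measurable Omega_M (restrict_space borel {0..1::real})"
    unfolding Omega_M_def by (rule measurable_component_singleton[OF that])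
  then show ?thesis by (simp add: measurable_restrict_space2_iff)
qed

lemma meas_joint: "(\<lambda>(w, u). Phi w u) \<in> measurable (Omega_M \<Otimes>\<^sub>M Unif_M) Arrow_M"
proof -
  have "(\<lambda>x. snd x i < fst x i) \<in> measurable (Omega_M \<Otimes>\<^sub>M Unif_M) (count_space UNIV)"
    if "i \<in> cookie_index" for i
  proof -
    have a: "(\<lambda>x. snd x i) \<in> borel_measurable (Omega_M \<Otimes>\<^sub>M Unif_M)"
      by (rule measurable_compose[OF measurable_snd comp_Unif[OF that]])
    have b: "(\<lambda>x. fst x i) \<in> borel_measurable (Omega_M \<Otimes>\<^sub>M Unif_M)"
      by (rule measurable_compose[OF measurable_fst comp_Omega[OF that]])
    show ?thesis using a b by measurable
  qed
  then have "(\<lambda>x. \<lambda>i\<in>cookie_index. snd x i < fst x i) \<in> measurable (Omega_M \<Otimes>\<^sub>M Unif_M) Arrow_M"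
    unfolding Arrow_M_def by (intro measurable_restrict) auto
  then show ?thesis by (simp add: Phi_def case_prod_beta)
qed

lemma shift_ci: "i \<in> cookie_index \<Longrightarrow> (fst i + 1, snd i) \<in> cookie_index"
  "i \<in> cookie_index \<Longrightarrow> (fst i - 1, snd i) \<in> cookie_index"
  by (auto simp: cookie_index_def)

lemma meas_shift: "shift \<in> measurable Omega_M Omega_M"
  unfolding shift_def Omega_M_def
  by (intro measurable_restrict measurable_component_singleton shift_ci)

lemma meas_ash: "ash \<in> measurable Arrow_M Arrow_M"
  unfolding ash_def[abs_def] Arrow_M_def
  by (intro measurable_restrict measurable_component_singleton shift_ci)

lemma meas_unsh: "unsh \<in> measurable Unif_M Unif_M"
  unfolding unsh_def[abs_def] Unif_M_def
  by (intro measurable_restrict measurable_component_singleton shift_ci)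

lemma unsh_inv: "distr Unif_M Unif_M unsh = Unif_M"
proof -
  have "distr (Pi\<^sub>M cookie_index (\<lambda>_. UM1)) (\<Pi>\<^sub>M i\<in>cookie_index. (\<lambda>_. UM1) ((\<lambda>i. (fst i - 1, snd i)) i))
     (\<lambda>\<omega>. \<lambda>n\<in>cookie_index. \<omega> ((\<lambda>i. (fst i - 1, snd i)) n)) = (\<Pi>\<^sub>M i\<in>cookie_index. (\<lambda>_. UM1) ((\<lambda>i. (fst i - 1, snd i)) i))"
    by (rule distr_PiM_reindex) (auto simp: prob_UM1 inj_on_def shift_ci)
  then show ?thesis unfolding Unif_M_def unsh_def by simp
qed

lemma Phi_shift: "Phi (shift w) u = ash (Phi w (unsh u))"
  by (auto simp: Phi_def shift_def ash_def unsh_def cookie_index_def fun_eq_iff)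

lemma Pw_shift: "Pw (shift w) = distr (Pw w) Arrow_M ash"
proof -
  have "distr (Pw w) Arrow_M ash = distr Unif_M Arrow_M (ash \<circ> Phi w)"
    unfolding Pw_def by (rule distr_distr[OF meas_ash meas_Phi])
  also have "\<dots> = distr (distr Unif_M Unif_M unsh) Arrow_M (ash \<circ> Phi w)"
    by (simp add: unsh_inv)
  also have "\<dots> = distr Unif_M Arrow_M (ash \<circ> Phi w \<circ> unsh)"
    by (rule distr_distr[OF measurable_comp[OF meas_Phi meas_ash] meas_unsh])
  also have "\<dots> = Pw (shift w)"
  proof -
    have "Phi (shift w) = ash \<circ> Phi w \<circ> unsh" by (rule ext) (simp add: Phi_shift)
    then show ?thesis unfolding Pw_def by simp
  qed
  finally show ?thesis by simp
qed

lemma prob_Pw: "prob_space (Pw w)"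
  unfolding Pw_def by (intro prob_space.prob_space_distr prob_Unif meas_Phi)

lemma Pw_shift_emeasure: "A \<in> sets Arrow_M \<Longrightarrow> emeasure (Pw (shift w)) A = emeasure (Pw w) (ash -` A \<inter> space Arrow_M)"
proof -
  assume A: "A \<in> sets Arrow_M"
  have m: "ash \<in> measurable (Pw w) Arrow_M" using meas_ash by (simp add: Pw_def)
  show ?thesis unfolding Pw_shift using emeasure_distr[OF m A] by (simp add: Pw_def)
qed

lemma ash_space: "a \<in> space Arrow_M \<Longrightarrow> ash a \<in> space Arrow_M"
  using measurable_space[OF meas_ash] by blast

lemma ash_Qset: "ash -` Qset m \<inter> space Arrow_M = Qset (m+1)"
  by (auto simp: Qset_def Qp_ash ash_space)

lemma ash_Eset: "ash -` Eset \<inter> space Arrow_M = Eset"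
  by (auto simp: Eset_def Ep_ash ash_space)

lemma Pw_iter_Q: "emeasure (Pw ((shift ^^ N) w)) (Qset m) = emeasure (Pw w) (Qset (m + int N))"
proof (induction N arbitrary: w m)
  case 0 then show ?case by simp
next
  case (Suc N)
  have "emeasure (Pw ((shift ^^ Suc N) w)) (Qset m) = emeasure (Pw ((shift ^^ N) (shift w))) (Qset m)"
    by (simp add: funpow_Suc_right del: funpow.simps)
  also have "\<dots> = emeasure (Pw (shift w)) (Qset (m + int N))" by (rule Suc.IH)
  also have "\<dots> = emeasure (Pw w) (Qset (m + int N + 1))"
    by (simp add: Pw_shift_emeasure Qset_sets ash_Qset)
  finally show ?case by (simp add: ac_simps)
qed

lemma Pw_shift_E: "emeasure (Pw (shift w)) Eset = emeasure (Pw w) Eset"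
  by (simp add: Pw_shift_emeasure Eset_sets ash_Eset)




definition Kc :: "nat \<Rightarrow> (int \<times> nat) set" where
  "Kc n = {int n} \<times> {1..}"

definition Asig :: "nat \<Rightarrow> (int \<times> nat \<Rightarrow> real) set set" where
  "Asig n = sigma_sets (space Unif_M)
     {(\<lambda>u. restrict (\<lambda>i. u i) (Kc n)) -` B \<inter> space Unif_M | B. B \<in> sets (Pi\<^sub>M (Kc n) (\<lambda>_. UM1))}"

lemma indep_coords: "prob_space.indep_vars Unif_M (\<lambda>_. UM1) (\<lambda>i u. u i) cookie_index"
proof -
  interpret U: prob_space Unif_M by (rule prob_Unif)
  have ne: "cookie_index \<noteq> {}" by (auto simp: cookie_index_def)
  have rv: "\<And>i. i \<in> cookie_index \<Longrightarrow> (\<lambda>u. u i) \<in> measurable Unif_M UM1"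
    using measurable_component_singleton[of _ cookie_index "\<lambda>_. UM1"] by (simp add: Unif_M_def)
  have L: "distr Unif_M (\<Pi>\<^sub>M i\<in>cookie_index. UM1) (\<lambda>x. \<lambda>i\<in>cookie_index. x i) = Unif_M"
  proof -
    have "distr Unif_M Unif_M (\<lambda>x. \<lambda>i\<in>cookie_index. x i) = distr Unif_M Unif_M (\<lambda>x. x)"
      by (rule distr_cong) (auto simp: space_Unif PiE_def extensional_def)
    then show ?thesis by (simp add: Unif_M_def)
  qed
  have R: "(\<Pi>\<^sub>M i\<in>cookie_index. distr Unif_M UM1 (\<lambda>u. u i)) = Unif_M"
    unfolding Unif_M_def
    by (rule PiM_cong) (auto intro: distr_PiM_component prob_UM1)
  show ?thesis
    using U.indep_vars_iff_distr_eq_PiM'[OF ne rv] L R by simp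
qed

lemma indep_A: "prob_space.indep_sets Unif_M Asig UNIV"
proof -
  interpret U: prob_space Unif_M by (rule prob_Unif)
  have disj: "disjoint_family_on Kc UNIV"
    by (auto simp: disjoint_family_on_def Kc_def)
  have sub: "\<And>j. j \<in> UNIV \<Longrightarrow> Kc j \<subseteq> cookie_index"
    by (auto simp: Kc_def cookie_index_def)
  have "U.indep_vars (\<lambda>j. Pi\<^sub>M (Kc j) (\<lambda>_. UM1)) (\<lambda>j u. restrict (\<lambda>i. u i) (Kc j)) UNIV"
    by (rule U.indep_vars_restrict[OF indep_coords sub disj])
  then show ?thesis unfolding U.indep_vars_def Asig_def by simp
qed

lemma sigma_A: "sigma_algebra (space Unif_M) (Asig n)"
  unfolding Asig_def by (rule sigma_algebra_sigma_sets) auto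

lemma Asig_sub: "S \<in> Asig m \<Longrightarrow> S \<subseteq> space Unif_M"
  unfolding Asig_def by (erule sigma_sets_into_sp[rotated]) auto

definition extn :: "nat \<Rightarrow> (int \<times> nat \<Rightarrow> real) \<Rightarrow> (int \<times> nat \<Rightarrow> real)" where
  "extn n u = (\<lambda>i\<in>cookie_index. if fst i \<ge> int n then u i else 0)"

lemma extn_meas:
  "extn n \<in> measurable (sigma (space Unif_M) (\<Union> (Asig ` {n..}))) Unif_M"
proof -
  let ?M = "sigma (space Unif_M) (\<Union> (Asig ` {n..}))"
  have subP: "\<Union> (Asig ` {n..}) \<subseteq> Pow (space Unif_M)"
    using Asig_sub by blast
  have sp: "space ?M = space Unif_M" using subP by (simp add: space_measure_of)
  have st: "sets ?M = sigma_sets (space Unif_M) (\<Union> (Asig ` {n..}))" using subP by (simp add: sets_measure_of)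
  have comp: "(\<lambda>u. if fst i \<ge> int n then u i else 0) \<in> measurable ?M UM1" if i: "i \<in> cookie_index" for i
  proof (cases "fst i \<ge> int n")
    case False then show ?thesis by simp
  next
    case True
    define m where "m = nat (fst i)"
    have im: "i \<in> Kc m" "m \<ge> n" using i True by (auto simp: Kc_def m_def cookie_index_def)
    have "(\<lambda>u. u i) \<in> measurable ?M UM1"
    proof (rule measurableI)
      fix x show "x i \<in> space UM1" by simp
    next
      fix B assume B: "B \<in> sets UM1"
      let ?B' = "(\<lambda>f. f i) -` B \<inter> space (Pi\<^sub>M (Kc m) (\<lambda>_. UM1))"
      have B': "?B' \<in> sets (Pi\<^sub>M (Kc m) (\<lambda>_. UM1))"
        by (rule measurable_sets[OF measurable_component_singleton[OF im(1)] B])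
      have eq: "(\<lambda>u. u i) -` B \<inter> space ?M = (\<lambda>u. restrict (\<lambda>i. u i) (Kc m)) -` ?B' \<inter> space Unif_M"
        using im(1) by (auto simp: sp space_PiM)
      have "(\<lambda>u. restrict (\<lambda>i. u i) (Kc m)) -` ?B' \<inter> space Unif_M \<in> Asig m"
        unfolding Asig_def using B' by (intro sigma_sets.Basic) blast
      then show "(\<lambda>u. u i) -` B \<inter> space ?M \<in> sets ?M"
        unfolding eq st using im(2) by (intro sigma_sets.Basic) blast
    qed
    then show ?thesis using True by simp
  qed
  show ?thesis
    unfolding extn_def[abs_def] Unif_M_def
    by (rule measurable_restrict) (use comp in \<open>simp add: Unif_M_def\<close>)
qed

lemma zero_one_Pw: "measure (Pw w) Eset = 0 \<or> measure (Pw w) Eset = 1"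
proof -
  interpret U: prob_space Unif_M by (rule prob_Unif)
  let ?X = "Phi w -` Eset \<inter> space Unif_M"
  have Xs: "?X \<in> sets Unif_M" by (rule measurable_sets[OF meas_Phi Eset_sets])
  have "?X \<in> U.tail_events Asig"
    unfolding U.tail_events_def
  proof (rule InterI, clarify)
    fix n
    let ?M = "sigma (space Unif_M) (\<Union> (Asig ` {n..}))"
    have subP: "\<Union> (Asig ` {n..}) \<subseteq> Pow (space Unif_M)"
      using Asig_sub by blast
    have sp: "space ?M = space Unif_M" using subP by (simp add: space_measure_of)
    have st: "sets ?M = sigma_sets (space Unif_M) (\<Union> (Asig ` {n..}))" using subP by (simp add: sets_measure_of)
    have eq: "?X = extn n -` ?X \<inter> space ?M"
    proof -
      have "Phi w (extn n u) \<in> Eset \<longleftrightarrow> Phi w u \<in> Eset" for u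
      proof -
        have "Ep (Phi w (extn n u)) = Ep (Phi w u)"
          by (rule Ep_cong[of n]) (auto simp: Phi_def extn_def cookie_index_def)
        moreover have "Phi w v \<in> space Arrow_M" for v
          by (auto simp: Phi_def space_Arrow)
        ultimately show ?thesis by (auto simp: Eset_def)
      qed
      moreover have "u \<in> space Unif_M \<Longrightarrow> extn n u \<in> space Unif_M" for u
        by (auto simp: space_Unif extn_def)
      ultimately show ?thesis by (auto simp: sp)
    qed
    have "extn n -` ?X \<inter> space ?M \<in> sets ?M"
      by (rule measurable_sets[OF extn_meas Xs])
    then show "?X \<in> sigma_sets (space Unif_M) (\<Union> (Asig ` {n..}))"
      using eq st by simp
  qed
  then have "U.prob ?X = 0 \<or> U.prob ?X = 1"
    by (intro U.kolmogorov_0_1_law[OF sigma_A indep_A])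
  moreover have "measure (Pw w) Eset = U.prob ?X"
    unfolding Pw_def by (rule measure_distr[OF meas_Phi Eset_sets])
  ultimately show ?thesis by simp
qed




lemma F_eq: "(\<lambda>(w, u). \<lambda>i\<in>cookie_index. u i < w i) = (\<lambda>(w, u). Phi w u)"
  by (simp add: Phi_def)

lemma arrow_law_eq: "arrow_law \<mu> = distr (\<mu> \<Otimes>\<^sub>M Unif_M) Arrow_M (\<lambda>(w, u). Phi w u)"
  unfolding arrow_law_def F_eq ..

lemma pair_pre:
  assumes "w \<in> space M" 
  shows "Pair w -` ((\<lambda>(w, u). Phi w u) -` A \<inter> space (M \<Otimes>\<^sub>M Unif_M)) = Phi w -` A \<inter> space Unif_M"
  using assms by (auto simp: space_pair_measure)

lemma emeasure_Pw: "A \<in> sets Arrow_M \<Longrightarrow> emeasure (Pw w) A = emeasure Unif_M (Phi w -` A \<inter> space Unif_M)"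
  unfolding Pw_def by (rule emeasure_distr[OF meas_Phi])

lemma meas_g_Omega: "A \<in> sets Arrow_M \<Longrightarrow> (\<lambda>w. emeasure (Pw w) A) \<in> borel_measurable Omega_M"
proof -
  assume A: "A \<in> sets Arrow_M"
  interpret U: prob_space Unif_M by (rule prob_Unif)
  have Q: "(\<lambda>(w, u). Phi w u) -` A \<inter> space (Omega_M \<Otimes>\<^sub>M Unif_M) \<in> sets (Omega_M \<Otimes>\<^sub>M Unif_M)"
    by (rule measurable_sets[OF meas_joint A])
  have "(\<lambda>x. emeasure Unif_M (Pair x -` ((\<lambda>(w, u). Phi w u) -` A \<inter> space (Omega_M \<Otimes>\<^sub>M Unif_M)))) \<in> borel_measurable Omega_M"
    by (rule U.measurable_emeasure_Pair[OF Q])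
  then show ?thesis
  proof (rule measurable_cong[THEN iffD1, rotated])
    fix w assume w: "w \<in> space Omega_M"
    show "emeasure Unif_M (Pair w -` ((\<lambda>(w, u). Phi w u) -` A \<inter> space (Omega_M \<Otimes>\<^sub>M Unif_M))) = emeasure (Pw w) A"
      by (simp only: pair_pre[OF w] emeasure_Pw[OF A])
  qed
qed

lemma shift_iter_meas: "shift ^^ N \<in> measurable Omega_M Omega_M"
  by (induction N) (auto intro: measurable_compose[OF _ meas_shift] simp: id_def)

theorem lemma3p6:
  fixes \<mu> :: "(int \<times> nat \<Rightarrow> real) measure"
  assumes "stationary_ergodic \<mu>"
    and "measure (arrow_law \<mu>) {a \<in> space (arrow_law \<mu>). \<forall>n. walk a 0 n \<noteq> -1} > 0"
  shows "AE a in arrow_law \<mu>. infinite {m::int. optional_regeneration a m}"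
proof -
  have pm: "prob_space \<mu>" and sm: "sets \<mu> = sets Omega_M" and inv: "distr \<mu> Omega_M shift = \<mu>"
    and erg: "\<And>A. A \<in> sets \<mu> \<Longrightarrow> shift -` A \<inter> space \<mu> = A \<Longrightarrow> measure \<mu> A = 0 \<or> measure \<mu> A = 1"
    using assms(1) by (auto simp: stationary_ergodic_def)
  interpret M: prob_space \<mu> by (rule pm)
  interpret U: prob_space Unif_M by (rule prob_Unif)
  define \<nu> where "\<nu> = arrow_law \<mu>"
  have spm: "space \<mu> = space Omega_M" by (rule sets_eq_imp_space_eq[OF sm])
  have measF: "(\<lambda>(w, u). Phi w u) \<in> measurable (\<mu> \<Otimes>\<^sub>M Unif_M) Arrow_M"
    using meas_joint measurable_cong_sets[OF sets_pair_measure_cong[OF sm refl] refl] by blast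
  have nuE: "\<nu> = distr (\<mu> \<Otimes>\<^sub>M Unif_M) Arrow_M (\<lambda>(w, u). Phi w u)"
    unfolding \<nu>_def by (rule arrow_law_eq)
  have pnu: "prob_space \<nu>"
    unfolding nuE by (intro prob_space.prob_space_distr measF prob_space_pair pm prob_Unif)
  interpret N: prob_space \<nu> by (rule pnu)
  have sets_nu: "sets \<nu> = sets Arrow_M" and space_nu: "space \<nu> = space Arrow_M"
    unfolding nuE by simp_all
  have meas_g: "(\<lambda>w. emeasure (Pw w) A) \<in> borel_measurable \<mu>" if "A \<in> sets Arrow_M" for A
    using meas_g_Omega[OF that] measurable_cong_sets[OF sm refl] by blast
  have nu_int: "emeasure \<nu> A = (\<integral>\<^sup>+w. emeasure (Pw w) A \<partial>\<mu>)" if A: "A \<in> sets Arrow_M" for A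
  proof -
    have Q: "(\<lambda>(w, u). Phi w u) -` A \<inter> space (\<mu> \<Otimes>\<^sub>M Unif_M) \<in> sets (\<mu> \<Otimes>\<^sub>M Unif_M)"
      by (rule measurable_sets[OF measF A])
    have "emeasure \<nu> A = emeasure (\<mu> \<Otimes>\<^sub>M Unif_M) ((\<lambda>(w, u). Phi w u) -` A \<inter> space (\<mu> \<Otimes>\<^sub>M Unif_M))"
      unfolding nuE by (rule emeasure_distr[OF measF A])
    also have "\<dots> = (\<integral>\<^sup>+w. emeasure Unif_M (Pair w -` ((\<lambda>(w, u). Phi w u) -` A \<inter> space (\<mu> \<Otimes>\<^sub>M Unif_M))) \<partial>\<mu>)"
      by (rule U.emeasure_pair_measure_alt[OF Q])
    also have "\<dots> = (\<integral>\<^sup>+w. emeasure (Pw w) A \<partial>\<mu>)"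
    proof (rule nn_integral_cong)
      fix w assume w: "w \<in> space \<mu>"
      show "emeasure Unif_M (Pair w -` ((\<lambda>(w, u). Phi w u) -` A \<inter> space (\<mu> \<Otimes>\<^sub>M Unif_M))) = emeasure (Pw w) A"
        by (simp only: pair_pre[OF w] emeasure_Pw[OF A])
    qed
    finally show ?thesis .
  qed
  have shift_mu: "shift \<in> measurable \<mu> Omega_M"
    using meas_shift measurable_cong_sets[OF sm refl] by blast
  have iter_mu: "shift ^^ N \<in> measurable \<mu> Omega_M" for N
    using shift_iter_meas measurable_cong_sets[OF sm refl] by blast
  have inv_iter: "distr \<mu> Omega_M (shift ^^ N) = \<mu>" for N
  proof (induction N)
    case 0 then show ?case using distr_id2[OF sm[symmetric]] by (simp add: id_def)
  next
    case (Suc N)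
    have "distr \<mu> Omega_M (shift ^^ Suc N) = distr \<mu> Omega_M (shift \<circ> shift ^^ N)" by simp
    also have "\<dots> = distr (distr \<mu> Omega_M (shift ^^ N)) Omega_M shift"
      by (rule distr_distr[OF meas_shift iter_mu, symmetric])
    also have "\<dots> = \<mu>" using Suc inv by simp
    finally show ?case .
  qed
  have nuQ: "emeasure \<nu> (Qset (int N)) = emeasure \<nu> (Qset 0)" for N
  proof -
    have "emeasure \<nu> (Qset (int N)) = (\<integral>\<^sup>+w. emeasure (Pw ((shift ^^ N) w)) (Qset 0) \<partial>\<mu>)"
      using nu_int[OF Qset_sets] Pw_iter_Q[of N _ 0] by simp
    also have "\<dots> = (\<integral>\<^sup>+w. emeasure (Pw w) (Qset 0) \<partial>distr \<mu> Omega_M (shift ^^ N))"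
      by (rule nn_integral_distr[symmetric, OF iter_mu]) (simp add: meas_g_Omega Qset_sets)
    also have "\<dots> = emeasure \<nu> (Qset 0)"
      using inv_iter nu_int[OF Qset_sets] by simp
    finally show ?thesis .
  qed
  have pos: "emeasure \<nu> (Qset 0) > 0"
  proof -
    have "{a \<in> space (arrow_law \<mu>). \<forall>n. walk a 0 n \<noteq> -1} = Qset 0"
      by (auto simp: Qset_def Qp_def space_nu[unfolded \<nu>_def])
    then have "N.prob (Qset 0) > 0" using assms(2) \<nu>_def by simp
    then show ?thesis by (simp add: N.emeasure_eq_measure)
  qed
  have nuE_ge: "emeasure \<nu> Eset \<ge> emeasure \<nu> (Qset 0)"
  proof -
    have dec: "decseq En" unfolding decseq_def En_def by (auto intro: order_trans)
    have "(INF N. emeasure \<nu> (En N)) = emeasure \<nu> (\<Inter>N. En N)"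
      by (rule INF_emeasure_decseq) (use En_sets sets_nu dec in auto)
    moreover have "emeasure \<nu> (Qset 0) \<le> emeasure \<nu> (En N)" for N
    proof -
      have "Qset (int N) \<subseteq> En N" by (auto simp: Qset_def En_def)
      then have "emeasure \<nu> (Qset (int N)) \<le> emeasure \<nu> (En N)"
        by (rule emeasure_mono) (simp add: sets_nu En_sets)
      then show ?thesis using nuQ by simp
    qed
    ultimately show ?thesis unfolding Eset_Inter by (metis INF_greatest)
  qed
  define G where "G = {w \<in> space \<mu>. emeasure (Pw w) Eset = 1}"
  have Gs: "G \<in> sets \<mu>"
  proof -
    have "G = (\<lambda>w. emeasure (Pw w) Eset) -` {1} \<inter> space \<mu>" by (auto simp: G_def)
    also have "\<dots> \<in> sets \<mu>" by (rule measurable_sets[OF meas_g[OF Eset_sets]]) simp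
    finally show ?thesis .
  qed
  have Ginv: "shift -` G \<inter> space \<mu> = G"
  proof -
    have "w \<in> space \<mu> \<Longrightarrow> shift w \<in> space \<mu>" for w
      using measurable_space[OF shift_mu] spm by auto
    then show ?thesis by (auto simp: G_def Pw_shift_E)
  qed
  have ind: "emeasure (Pw w) Eset = indicator G w" if "w \<in> space \<mu>" for w
  proof -
    interpret P: prob_space "Pw w" by (rule prob_Pw)
    show ?thesis using zero_one_Pw[of w] that
      by (auto simp: G_def P.emeasure_eq_measure indicator_def)
  qed
  have nuG: "emeasure \<nu> Eset = emeasure \<mu> G"
  proof -
    have "emeasure \<nu> Eset = (\<integral>\<^sup>+w. indicator G w \<partial>\<mu>)"
      unfolding nu_int[OF Eset_sets] by (rule nn_integral_cong) (simp add: ind)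
    also have "\<dots> = emeasure \<mu> G" by (rule nn_integral_indicator[OF Gs])
    finally show ?thesis .
  qed
  have "M.prob G = 0 \<or> M.prob G = 1" by (rule erg[OF Gs Ginv])
  moreover have "M.prob G \<noteq> 0"
  proof
    assume "M.prob G = 0"
    then have "emeasure \<mu> G = 0" by (simp add: M.emeasure_eq_measure)
    then show False using nuE_ge pos nuG by simp
  qed
  ultimately have "M.prob G = 1" by simp
  then have "emeasure \<nu> Eset = 1" using nuG by (simp add: M.emeasure_eq_measure)
  then have "N.prob Eset = 1" by (simp add: N.emeasure_eq_measure)
  then have "AE a in \<nu>. a \<in> Eset" using N.prob_eq_1 sets_nu Eset_sets by simp
  then show ?thesis unfolding \<nu>_def
    by (rule AE_mp) (auto simp: Eset_def Ep_def)
qed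


end
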